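(* Let $N=\binom n2$, let $s_{i_1}\cdots s_{i_N}=(s_1\cdots s_{n-1})(s_1\cdots s_{n-2})\cdots(s_1)$, and let $\Phi_{id,w_0}:\mathbb{R}_{>0}^N\to\mathbb{R}^{2^n-2}$ send $\mathbf a=(a_1,\dots,a_N)$ to the Plücker coordinates $(P_I(M(\mathbf a)))_{\emptyset\ne I\subsetneq[n]}$ of $M(\mathbf a)=x_{i_1}(a_1)\cdots x_{i_N}(a_N)$; this map is injective, with inverse $\Psi_{id,w_0}$ on its image. Then $\Psi_{id,w_0}$ can be expressed by Laurent monomials in the extremal non-zero Plücker coordinates: for each $j\in[N]$ there is a Laurent monomial $m_j$ in the variables $P_I$, $I$ extremal, such that $a_j=m_j\big((P_I(M(\mathbf a)))_{I\text{ extremal}}\big)$ for all $\mathbf a\in\mathbb{R}_{>0}^N$.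
   Context: $x_k(a)$ is the $n\times n$ identity matrix with an extra entry $a$ in row $k$, column $k+1$. $P_I(M)$ is the minor of $M$ in rows $1,\dots,|I|$ and columns $I$. For flags of the form $M(\mathbf a)$ with $\mathbf a>0$, all $P_I$ are positive, and the extremal indices are defined as follows: for a $k$-subset $I$, let $B=\{i\in I:\exists j\notin I,\ i<j,\ P_{(I\setminus i)\cup j}\ne0\}$; if $P_I\ne0$ and $B\neq\emptyset$, set $b=\max B$, $a=\max\{j\notin I: P_{(I\setminus b)\cup j}\ne0\}$ and $\Xi(I)=(I\setminus b)\cup a$, otherwise $\Xi(I)=I$; with $I_k$ the Gale-minimal $k$-subset with $P_{I_k}\ne 0$ (here $I_k=[k]$), the extremal indices are the sets $\Xi^m(I_k)$, $m\ge0$, $k\in[n-1]$. (Concretely, these are the sets $\{1,\dots,m\}\cup\{k,\dots,n\}$ of size at most $n-1$.) *)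

theory Defs
  imports "Jordan_Normal_Form.Determinant"
begin

text \<open>Matrices are n x n real matrices of type real mat (0-based internally);
  row/column indices of the paper (1..n) are shifted by one.\<close>

text \<open>x_k(a): identity with extra entry a in row k, column k+1 (1-based k).\<close>
definition xk :: "nat \<Rightarrow> nat \<Rightarrow> real \<Rightarrow> real mat" where
  "xk n k a = mat n n (\<lambda>(i,j). if i = j then 1 else if i + 1 = k \<and> j = k then a else 0)"

text \<open>The reduced word (s_1...s_{n-1})(s_1...s_{n-2})...(s_1) as list i_1..i_N.\<close>
definition redword :: "nat \<Rightarrow> nat list" where
  "redword n = concat (map (\<lambda>k. [1..<Suc k]) (rev [1..<n]))"

definition Nn :: "nat \<Rightarrow> nat" where
  "Nn n = n choose 2"

definition Mflag :: "nat \<Rightarrow> real list \<Rightarrow> real mat" where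
  "Mflag n as = foldr (\<lambda>(k, a) B. xk n k a * B) (zip (redword n) as) (1\<^sub>m n)"

definition plucker :: "real mat \<Rightarrow> nat set \<Rightarrow> real" where
  "plucker M I = det (mat (card I) (card I)
      (\<lambda>(i,j). M $$ (i, sorted_list_of_set I ! j - 1)))"

definition gale_le :: "nat set \<Rightarrow> nat set \<Rightarrow> bool" where
  "gale_le I J = (\<forall>t < card I. sorted_list_of_set I ! t \<le> sorted_list_of_set J ! t)"

definition Xi :: "nat \<Rightarrow> (nat set \<Rightarrow> real) \<Rightarrow> nat set \<Rightarrow> nat set" where
  "Xi n P I =
    (let B = {i \<in> I. \<exists>j \<in> {1..n} - I. i < j \<and> P ((I - {i}) \<union> {j}) \<noteq> 0} in
     if P I \<noteq> 0 \<and> B \<noteq> {} then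
       (let b = Max B; a = Max {j \<in> {1..n} - I. P ((I - {b}) \<union> {j}) \<noteq> 0}
        in (I - {b}) \<union> {a})
     else I)"

definition Ik :: "nat \<Rightarrow> (nat set \<Rightarrow> real) \<Rightarrow> nat \<Rightarrow> nat set" where
  "Ik n P k = (THE I. I \<subseteq> {1..n} \<and> card I = k \<and> P I \<noteq> 0 \<and>
      (\<forall>J. J \<subseteq> {1..n} \<and> card J = k \<and> P J \<noteq> 0 \<longrightarrow> gale_le I J))"

definition extremal :: "nat \<Rightarrow> (nat set \<Rightarrow> real) \<Rightarrow> nat set set" where
  "extremal n P = {(Xi n P ^^ m) (Ik n P k) | m k. 1 \<le> k \<and> k \<le> n - 1}"

end

theory Submission
  imports Defs
begin

abbreviation fl :: "nat \<Rightarrow> nat \<times> real \<Rightarrow> real mat \<Rightarrow> real mat" where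
  "fl n \<equiv> (\<lambda>(k, a) B. xk n k a * B)"

lemma xk_carrier[simp]: "xk n k a \<in> carrier_mat n n"
  unfolding xk_def by auto

lemma xk_mult_index:
  assumes B: "B \<in> carrier_mat n n" and k: "1 \<le> k" "k < n" and ij: "i < n" "j < n"
  shows "(xk n k a * B) $$ (i,j) = B $$ (i,j) + (if i = k - 1 then a * B $$ (k,j) else 0)"
proof -
  have "(xk n k a * B) $$ (i,j) = (\<Sum>l\<in>{0..<n}. xk n k a $$ (i,l) * B $$ (l,j))"
    using B ij by (auto simp: index_mult_mat scalar_prod_def xk_def)
  also have "\<dots> = (\<Sum>l\<in>{0..<n}. (if l = i then B $$ (i,j) else 0) +
       (if l = k \<and> i = k - 1 then a * B $$ (k,j) else 0))"
    by (rule sum.cong, simp, insert ij k, auto simp: xk_def)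
  also have "\<dots> = B $$ (i,j) + (if i = k - 1 then a * B $$ (k,j) else 0)"
    using ij k by (simp add: sum.distrib sum.delta)
  finally show ?thesis .
qed

lemma foldr_fl_carrier: "B \<in> carrier_mat n n \<Longrightarrow> foldr (fl n) ps B \<in> carrier_mat n n"
  by (induction ps) (auto intro!: mult_carrier_mat[of _ n n _ n])

definition emb :: "nat \<Rightarrow> real mat \<Rightarrow> real mat" where
  "emb n A = mat n n (\<lambda>(i,j). if i < n - 1 \<and> j < n - 1 then A $$ (i,j) else if i = j then 1 else 0)"

lemma emb_carrier[simp]: "emb n A \<in> carrier_mat n n" unfolding emb_def by auto
lemma emb_dims[simp]: "dim_row (emb n A) = n" "dim_col (emb n A) = n" unfolding emb_def by auto

lemma foldr_emb:
  assumes "\<forall>p \<in> set ps. 1 \<le> fst p \<and> fst p < n - 1"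
  shows "foldr (fl n) ps (1\<^sub>m n) = emb n (foldr (fl (n-1)) ps (1\<^sub>m (n-1)))"
  using assms
proof (induction ps)
  case Nil
  show ?case by (rule eq_matI) (auto simp: emb_def)
next
  case (Cons p ps)
  obtain k a where p: "p = (k,a)" by (cases p)
  have k: "1 \<le> k" "k < n - 1" using Cons.prems p by auto
  have IH: "foldr (fl n) ps (1\<^sub>m n) = emb n (foldr (fl (n-1)) ps (1\<^sub>m (n-1)))"
    using Cons by auto
  define B where "B = foldr (fl (n-1)) ps (1\<^sub>m (n-1))"
  have B: "B \<in> carrier_mat (n-1) (n-1)" unfolding B_def by (rule foldr_fl_carrier) auto
  show ?case
  proof (rule eq_matI)
    fix i j assume ij: "i < dim_row (emb n (foldr (fl (n-1)) (p # ps) (1\<^sub>m (n-1))))"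
       "j < dim_col (emb n (foldr (fl (n-1)) (p # ps) (1\<^sub>m (n-1))))"
    hence ij: "i < n" "j < n" by auto
    have "foldr (fl n) (p # ps) (1\<^sub>m n) $$ (i,j) = (xk n k a * emb n B) $$ (i,j)"
      using IH p B_def by simp
    also have "\<dots> = emb n B $$ (i,j) + (if i = k - 1 then a * emb n B $$ (k,j) else 0)"
      using xk_mult_index[OF emb_carrier, of k n i j a] k ij by auto
    also have "\<dots> = emb n (xk (n-1) k a * B) $$ (i,j)"
      using xk_mult_index[OF B, of k i j a] k ij B by (auto simp: emb_def)
    finally show "foldr (fl n) (p # ps) (1\<^sub>m n) $$ (i,j) =
       emb n (foldr (fl (n-1)) (p # ps) (1\<^sub>m (n-1))) $$ (i,j)" using p B_def by simp
  qed (insert foldr_fl_carrier[of "1\<^sub>m n" n "p#ps"], auto)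
qed

lemma redword_Suc: "redword (Suc n) = [1..<Suc n] @ redword n"
proof (cases n)
  case 0 then show ?thesis by (simp add: redword_def)
next
  case (Suc m)
  then show ?thesis unfolding redword_def by simp
qed

lemma redword_0[simp]: "redword 0 = []" by (simp add: redword_def)

lemma redword_set: "k \<in> set (redword n) \<Longrightarrow> 1 \<le> k \<and> k < n"
  unfolding redword_def by auto

lemma Mflag_carrier: "Mflag n as \<in> carrier_mat n n"
  unfolding Mflag_def by (rule foldr_fl_carrier) auto

lemma Mflag_Suc:
  "Mflag (Suc n) as = foldr (fl (Suc n)) (zip [1..<Suc n] (take n as)) (emb (Suc n) (Mflag n (drop n as)))"
proof -
  have "Mflag (Suc n) as = foldr (fl (Suc n)) (zip [1..<Suc n] (take n as))
      (foldr (fl (Suc n)) (zip (redword n) (drop n as)) (1\<^sub>m (Suc n)))"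
    unfolding Mflag_def redword_Suc zip_append1 foldr_append length_upt by (simp del: upt_Suc)
  also have "foldr (fl (Suc n)) (zip (redword n) (drop n as)) (1\<^sub>m (Suc n))
     = emb (Suc n) (Mflag n (drop n as))"
    unfolding Mflag_def
    by (subst foldr_emb) (auto dest!: set_zip_leftD redword_set)
  finally show ?thesis .
qed

lemma G_rows:
  assumes W: "W \<in> carrier_mat n n"
  shows "1 \<le> r \<Longrightarrow> r \<le> n \<Longrightarrow> \<forall>i j. i < n \<longrightarrow> j < n \<longrightarrow>
    ((i+1 < r \<or> i = n-1) \<longrightarrow> foldr (fl n) (map (\<lambda>k. (k, c k)) [r..<n]) W $$ (i,j) = W $$ (i,j)) \<and>
    ((r \<le> i+1 \<and> i < n-1) \<longrightarrow> foldr (fl n) (map (\<lambda>k. (k, c k)) [r..<n]) W $$ (i,j) = W $$ (i,j)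
        + c (i+1) * foldr (fl n) (map (\<lambda>k. (k, c k)) [r..<n]) W $$ (i+1,j))"
proof (induction "n - r" arbitrary: r)
  case 0
  then have "r = n" by auto
  then show ?case by auto
next
  case (Suc d)
  have rn: "r < n" using Suc by auto
  define G' where "G' = foldr (fl n) (map (\<lambda>k. (k, c k)) [Suc r..<n]) W"
  have G'c: "G' \<in> carrier_mat n n" unfolding G'_def by (rule foldr_fl_carrier[OF W])
  have IH: "\<forall>i j. i < n \<longrightarrow> j < n \<longrightarrow>
    ((i+1 < Suc r \<or> i = n-1) \<longrightarrow> G' $$ (i,j) = W $$ (i,j)) \<and>
    ((Suc r \<le> i+1 \<and> i < n-1) \<longrightarrow> G' $$ (i,j) = W $$ (i,j) + c (i+1) * G' $$ (i+1,j))"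
    unfolding G'_def using Suc.hyps(1)[of "Suc r"] Suc.hyps(2) Suc.prems rn by auto
  have G: "foldr (fl n) (map (\<lambda>k. (k, c k)) [r..<n]) W = xk n r (c r) * G'"
    unfolding G'_def using rn by (simp add: upt_conv_Cons)
  have Gi: "\<And>i j. i < n \<Longrightarrow> j < n \<Longrightarrow> (xk n r (c r) * G') $$ (i,j) =
      G' $$ (i,j) + (if i = r - 1 then c r * G' $$ (r,j) else 0)"
    using xk_mult_index[OF G'c] Suc.prems rn by auto
  show ?case unfolding G
  proof (intro allI impI conjI)
    fix i j assume ij: "i < n" "j < n"
    {
      assume a: "i + 1 < r \<or> i = n - 1"
      then have "i \<noteq> r - 1" using rn Suc.prems(1) by auto
      then show "(xk n r (c r) * G') $$ (i, j) = W $$ (i, j)"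
        using Gi[OF ij] IH ij rn a by auto
    }
    {
      assume a: "r \<le> i + 1 \<and> i < n - 1"
      show "(xk n r (c r) * G') $$ (i, j) = W $$ (i, j) + c (i + 1) * (xk n r (c r) * G') $$ (i + 1, j)"
      proof (cases "i = r - 1")
        case True
        then show ?thesis using Gi[OF ij] Gi[of "i+1" j] IH ij rn a Suc.prems by auto
      next
        case False
        then show ?thesis using Gi[OF ij] Gi[of "i+1" j] IH ij rn a Suc.prems by auto
      qed
    }
  qed
qed

lemma zip_take_map: "n \<le> length as \<Longrightarrow>
   zip [1..<Suc n] (take n as) = map (\<lambda>k. (k, as ! (k - 1))) [1..<Suc n]"
  by (rule nth_equalityI) (simp_all del: upt_Suc)

lemma Mflag_rel:
  assumes len: "n \<le> length as" and i: "i < n" and j: "j < Suc n"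
  shows "Mflag (Suc n) as $$ (i,j) = emb (Suc n) (Mflag n (drop n as)) $$ (i,j)
           + as ! i * Mflag (Suc n) as $$ (Suc i, j)"
  using G_rows[OF emb_carrier, of 1 "Suc n" "\<lambda>k. as ! (k - 1)" "Mflag n (drop n as)"] i j
  unfolding Mflag_Suc zip_take_map[OF len] by auto

lemma Mflag_rel_last:
  assumes len: "n \<le> length as" and j: "j < Suc n"
  shows "Mflag (Suc n) as $$ (n,j) = emb (Suc n) (Mflag n (drop n as)) $$ (n,j)"
  using G_rows[OF emb_carrier, of 1 "Suc n" "\<lambda>k. as ! (k - 1)" "Mflag n (drop n as)"] j
  unfolding Mflag_Suc zip_take_map[OF len] by auto

lemma foldr_tri:
  assumes "\<forall>p \<in> set ps. 1 \<le> fst p \<and> fst p < n" and "i < n" "j \<le> i"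
  shows "foldr (fl n) ps (1\<^sub>m n) $$ (i,j) = (if i = j then 1 else 0)"
  using assms
proof (induction ps arbitrary: i j)
  case Nil then show ?case by auto
next
  case (Cons p ps)
  obtain k a where p: "p = (k,a)" by (cases p)
  have k: "1 \<le> k" "k < n" using Cons.prems p by auto
  have c: "foldr (fl n) ps (1\<^sub>m n) \<in> carrier_mat n n" by (rule foldr_fl_carrier) auto
  show ?case using xk_mult_index[OF c k Cons.prems(2), of j a] Cons.IH[of i j] Cons.IH[of k j] Cons.prems p k
    by auto
qed

lemma Mflag_tri: "i < n \<Longrightarrow> j \<le> i \<Longrightarrow> Mflag n as $$ (i,j) = (if i = j then 1 else 0)"
  unfolding Mflag_def by (rule foldr_tri) (auto dest!: set_zip_leftD redword_set)

definition cs :: "nat \<Rightarrow> nat \<Rightarrow> nat \<Rightarrow> nat \<Rightarrow> nat" where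
  "cs n m p j = (if j < m then j else n - p + (j - m))"

definition Q :: "nat \<Rightarrow> real list \<Rightarrow> nat \<Rightarrow> nat \<Rightarrow> real" where
  "Q n as m p = det (mat (m+p) (m+p) (\<lambda>(i,j). Mflag n as $$ (i, cs n m p j)))"

lemma prod_list_const_1: "prod_list (map (\<lambda>_. 1::real) xs) = 1"
  by (induction xs) auto

lemma Q_one:
  assumes "p = 0 \<or> m + p = n" "m + p \<le> n"
  shows "Q n as m p = 1"
proof -
  have csj: "\<And>j. j < m + p \<Longrightarrow> cs n m p j = j" using assms unfolding cs_def by auto
  let ?A = "mat (m+p) (m+p) (\<lambda>(i,j). Mflag n as $$ (i, cs n m p j))"
  have ut: "upper_triangular ?A"
    unfolding upper_triangular_def using csj assms(2) Mflag_tri by auto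
  have "det ?A = prod_list (diag_mat ?A)"
    by (rule det_upper_triangular[OF ut]) auto
  also have "diag_mat ?A = map (\<lambda>_. 1) [0..<m+p]"
    unfolding diag_mat_def using csj assms(2) Mflag_tri by auto
  also have "prod_list (map (\<lambda>_. 1::real) [0..<m+p]) = 1"
    by (simp add: prod_list_const_1)
  finally show ?thesis unfolding Q_def .
qed

lemma Zlast:
  assumes len: "n \<le> length as"
  shows "i \<le> n \<Longrightarrow> Mflag (Suc n) as $$ (i, n) = (\<Prod>t\<in>{i..<n}. as ! t)"
proof (induction "n - i" arbitrary: i)
  case 0
  then have "i = n" by auto
  then show ?case using Mflag_rel_last[OF len, of n] by (simp add: emb_def)
next
  case (Suc d)
  then have i: "i < n" by auto
  have "Mflag (Suc n) as $$ (i, n) = emb (Suc n) (Mflag n (drop n as)) $$ (i,n)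
           + as ! i * Mflag (Suc n) as $$ (Suc i, n)" by (rule Mflag_rel[OF len i]) auto
  also have "emb (Suc n) (Mflag n (drop n as)) $$ (i,n) = 0" using i by (simp add: emb_def)
  also have "Mflag (Suc n) as $$ (Suc i, n) = (\<Prod>t\<in>{Suc i..<n}. as ! t)"
    using Suc by auto
  finally show ?case using i by (simp add: prod.atLeast_Suc_lessThan)
qed

lemma Q_rec:
  assumes len: "n \<le> length as" and mp: "m + Suc p \<le> n"
  shows "Q (Suc n) as m (Suc p) = (\<Prod>t\<in>{m+p..<n}. as ! t) * Q n (drop n as) m p"
proof -
  define k where "k = m + Suc p"
  define Z where "Z = Mflag (Suc n) as"
  define W where "W = emb (Suc n) (Mflag n (drop n as))"
  define c where "c = cs (Suc n) m (Suc p)"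
  define A where "A = mat k k (\<lambda>(i,j). Z $$ (i, c j))"
  define L :: "real mat" where "L = mat k k (\<lambda>(i,j). if i = j then 1 else if j = Suc i then - as!i else 0)"
  define B where "B = mat k k (\<lambda>(i,j). if i < k - 1 then W $$ (i, c j) else Z $$ (k-1, c j))"
  have cb: "\<And>j. j < k \<Longrightarrow> c j < Suc n" unfolding c_def cs_def k_def using mp by auto
  have cb2: "\<And>j. j < k - 1 \<Longrightarrow> c j < n" unfolding c_def cs_def k_def using mp by auto
  have ck: "c (k - 1) = n" unfolding c_def cs_def k_def using mp by auto
  have A: "A \<in> carrier_mat k k" and L: "L \<in> carrier_mat k k" and B: "B \<in> carrier_mat k k"
    unfolding A_def L_def B_def by auto
  have LA: "L * A = B"
  proof (rule eq_matI)
    fix i j assume "i < dim_row B" "j < dim_col B"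
    hence ij: "i < k" "j < k" unfolding B_def by auto
    have "(L * A) $$ (i,j) = (\<Sum>l\<in>{0..<k}. L $$ (i,l) * A $$ (l,j))"
      using ij A L by (auto simp: index_mult_mat scalar_prod_def)
    also have "\<dots> = (\<Sum>l\<in>{0..<k}. (if l = i then A $$ (i,j) else 0) +
       (if l = Suc i then - as!i * A $$ (Suc i,j) else 0))"
      by (rule sum.cong, simp, insert ij, auto simp: L_def)
    also have "\<dots> = A $$ (i,j) + (if Suc i < k then - as!i * A $$ (Suc i,j) else 0)"
      using ij by (simp add: sum.distrib sum.delta)
    also have "\<dots> = B $$ (i,j)"
    proof (cases "i < k - 1")
      case True
      have "i < n" using True mp k_def by auto
      then have "Z $$ (i, c j) = W $$ (i, c j) + as ! i * Z $$ (Suc i, c j)"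
        unfolding Z_def W_def using Mflag_rel[OF len _ cb[OF ij(2)]] by auto
      then show ?thesis using True ij unfolding A_def B_def by auto
    next
      case False
      then have "i = k - 1" using ij by auto
      then show ?thesis using ij False unfolding A_def B_def by auto
    qed
    finally show "(L * A) $$ (i,j) = B $$ (i,j)" .
  qed (use L A B in auto)
  have utL: "upper_triangular L" unfolding upper_triangular_def L_def by auto
  have "det L = prod_list (diag_mat L)" by (rule det_upper_triangular[OF utL L])
  also have "diag_mat L = map (\<lambda>_. 1) [0..<k]" unfolding diag_mat_def L_def by auto
  finally have dL: "det L = 1" by (simp add: prod_list_const_1)
  have "det A = det B" using det_mult[OF L A] LA dL by simp
  also have "det B = (\<Sum>i<k. B $$ (i,k-1) * cofactor B i (k-1))"
    by (rule laplace_expansion_column[OF B]) (auto simp: k_def)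
  also have "\<dots> = (\<Sum>i<k. if i = k - 1 then B $$ (k-1,k-1) * cofactor B (k-1) (k-1) else 0)"
  proof (rule sum.cong)
    fix i assume i: "i \<in> {..<k}"
    show "B $$ (i,k-1) * cofactor B i (k-1) = (if i = k - 1 then B $$ (k-1,k-1) * cofactor B (k-1) (k-1) else 0)"
    proof (cases "i = k - 1")
      case False
      then have "i < k - 1" using i by auto
      moreover have "i < n" using calculation mp k_def by auto
      ultimately have "B $$ (i,k-1) = 0" using i ck unfolding B_def W_def emb_def by auto
      then show ?thesis using False by simp
    qed simp
  qed simp
  also have "\<dots> = B $$ (k-1,k-1) * cofactor B (k-1) (k-1)" by (simp add: k_def)
  also have "B $$ (k-1,k-1) = (\<Prod>t\<in>{m+p..<n}. as ! t)"
    unfolding B_def using ck Zlast[OF len, of "m+p"] mp by (simp add: k_def Z_def)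
  also have "cofactor B (k-1) (k-1) = det (mat_delete B (k-1) (k-1))"
    unfolding cofactor_def by simp
  also have "mat_delete B (k-1) (k-1) = mat (m+p) (m+p) (\<lambda>(i,j). Mflag n (drop n as) $$ (i, cs n m p j))"
  proof (rule eq_matI)
    fix i j assume "i < dim_row (mat (m+p) (m+p) (\<lambda>(i,j). Mflag n (drop n as) $$ (i, cs n m p j)))"
      "j < dim_col (mat (m+p) (m+p) (\<lambda>(i,j). Mflag n (drop n as) $$ (i, cs n m p j)))"
    hence ij: "i < m + p" "j < m + p" by auto
    have "c j = cs n m p j" unfolding c_def cs_def by auto
    moreover have "c j < n" using cb2 ij k_def by auto
    moreover have "i < n" using ij mp by auto
    ultimately show "mat_delete B (k-1) (k-1) $$ (i,j) = mat (m+p) (m+p) (\<lambda>(i,j). Mflag n (drop n as) $$ (i, cs n m p j)) $$ (i,j)"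
      using ij unfolding mat_delete_def B_def W_def emb_def k_def by auto
  qed (auto simp: B_def k_def)
  finally show ?thesis unfolding Q_def A_def Z_def c_def k_def by simp
qed

definition T :: "nat \<Rightarrow> nat \<Rightarrow> nat \<Rightarrow> nat set" where
  "T n m p = {1..m} \<union> {Suc n - p..n}"

definition E :: "nat \<Rightarrow> nat set set" where
  "E n = {T n m p | m p. 1 \<le> m + p \<and> m + p \<le> n - 1}"

definition PosS :: "nat \<Rightarrow> real list set" where
  "PosS n = {as. length as = Nn n \<and> (\<forall>x \<in> set as. x > 0)}"

lemma Nn_Suc: "Nn (Suc n) = n + Nn n"
  unfolding Nn_def numeral_2_eq_2 by simp

lemma T_list:
  assumes "m + p \<le> n"
  shows "sorted_list_of_set (T n m p) = [1..<Suc m] @ [Suc n - p..<Suc n]"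
proof -
  let ?xs = "[1..<Suc m] @ [Suc n - p..<Suc n]"
  have s: "T n m p = set ?xs" unfolding T_def by auto
  have "sorted ?xs" using assms by (auto simp: sorted_append)
  moreover have "distinct ?xs" using assms by auto
  ultimately show ?thesis unfolding s sorted_list_of_set_sort_remdups
    by (simp add: distinct_remdups_id sorted_sort_id)
qed

lemma T_card: "m + p \<le> n \<Longrightarrow> card (T n m p) = m + p"
proof -
  assume a: "m + p \<le> n"
  have "card (T n m p) = length (sorted_list_of_set (T n m p))" by simp
  also have "\<dots> = m + p" using T_list[OF a] a by (simp del: upt_Suc)
  finally show ?thesis .
qed

lemma plucker_T:
  assumes "m + p \<le> n"
  shows "plucker M (T n m p) = det (mat (m+p) (m+p) (\<lambda>(i,j). M $$ (i, cs n m p j)))"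
proof -
  have "mat (card (T n m p)) (card (T n m p)) (\<lambda>(i,j). M $$ (i, sorted_list_of_set (T n m p) ! j - 1))
     = mat (m+p) (m+p) (\<lambda>(i,j). M $$ (i, cs n m p j))"
  proof (rule eq_matI)
    fix i j assume "i < dim_row (mat (m+p) (m+p) (\<lambda>(i,j). M $$ (i, cs n m p j)))"
       "j < dim_col (mat (m+p) (m+p) (\<lambda>(i,j). M $$ (i, cs n m p j)))"
    hence ij: "i < m + p" "j < m + p" by auto
    have "sorted_list_of_set (T n m p) ! j - 1 = cs n m p j"
      unfolding T_list[OF assms] cs_def using ij assms by (auto simp: nth_append)
    then show "mat (card (T n m p)) (card (T n m p)) (\<lambda>(i,j). M $$ (i, sorted_list_of_set (T n m p) ! j - 1)) $$ (i,j)
        = mat (m+p) (m+p) (\<lambda>(i,j). M $$ (i, cs n m p j)) $$ (i,j)" using ij T_card[OF assms] by auto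
  qed (auto simp: T_card[OF assms])
  then show ?thesis unfolding plucker_def by simp
qed

lemma plucker_Q: "m + p \<le> n \<Longrightarrow> plucker (Mflag n as) (T n m p) = Q n as m p"
  unfolding Q_def by (rule plucker_T)

lemma Pos_drop: "as \<in> PosS (Suc n) \<Longrightarrow> drop n as \<in> PosS n"
  unfolding PosS_def Nn_Suc by (auto dest: in_set_dropD)

lemma Pos_nth: "as \<in> PosS n \<Longrightarrow> t < Nn n \<Longrightarrow> as ! t > 0"
  unfolding PosS_def by auto

lemma Q_pos: "as \<in> PosS n \<Longrightarrow> m + p \<le> n \<Longrightarrow> Q n as m p > 0"
proof (induction p arbitrary: n as)
  case 0
  then show ?case using Q_one by simp
next
  case (Suc p)
  show ?case
  proof (cases "m + Suc p = n")
    case True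
    then show ?thesis using Q_one by simp
  next
    case False
    then obtain n' where n: "n = Suc n'" and mp: "m + Suc p \<le> n'" using Suc.prems by (cases n) auto
    have len: "n' \<le> length as" using Suc.prems(1) unfolding n PosS_def Nn_Suc by auto
    have "Q n as m (Suc p) = (\<Prod>t\<in>{m+p..<n'}. as ! t) * Q n' (drop n' as) m p"
      unfolding n by (rule Q_rec[OF len mp])
    moreover have "(\<Prod>t\<in>{m+p..<n'}. as ! t) > 0"
      by (rule prod_pos) (use Pos_nth[OF Suc.prems(1)[unfolded n]] in \<open>auto simp: Nn_Suc\<close>)
    moreover have "Q n' (drop n' as) m p > 0"
      using Suc.IH[OF Pos_drop[OF Suc.prems(1)[unfolded n]]] mp by auto
    ultimately show ?thesis by simp
  qed
qed

definition LM :: "nat \<Rightarrow> (real list \<Rightarrow> real) \<Rightarrow> bool" where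
  "LM n f \<longleftrightarrow> (\<exists>e::nat set \<Rightarrow> int. \<forall>as \<in> PosS n. f as = (\<Prod>I \<in> E n. plucker (Mflag n as) I powi e I))"

lemma T_sub: "m + p \<le> n \<Longrightarrow> T n m p \<subseteq> {1..n}" unfolding T_def by auto

lemma E_finite: "finite (E n)"
proof (rule finite_subset)
  show "E n \<subseteq> Pow {1..n}"
  proof
    fix I assume "I \<in> E n"
    then obtain m p where "I = T n m p" "m + p \<le> n" unfolding E_def by auto
    then show "I \<in> Pow {1..n}" using T_sub by auto
  qed
qed auto

lemma E_pos: "as \<in> PosS n \<Longrightarrow> I \<in> E n \<Longrightarrow> plucker (Mflag n as) I > 0"
  unfolding E_def using plucker_Q Q_pos
  by (smt (verit, ccfv_threshold) diff_le_self le_trans mem_Collect_eq)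

lemma LM_cong: "LM n f \<Longrightarrow> (\<And>as. as \<in> PosS n \<Longrightarrow> f as = g as) \<Longrightarrow> LM n g"
  unfolding LM_def by metis

lemma LM_one: "LM n (\<lambda>_. 1)"
  unfolding LM_def by (rule exI[of _ "\<lambda>_. 0"]) simp

lemma LM_P: "I \<in> E n \<Longrightarrow> LM n (\<lambda>as. plucker (Mflag n as) I)"
  unfolding LM_def
proof (intro exI[of _ "\<lambda>J. if J = I then 1 else 0"] ballI)
  fix as assume "I \<in> E n" "as \<in> PosS n"
  have "(\<Prod>J\<in>E n. plucker (Mflag n as) J powi (if J = I then 1 else 0)) =
        (\<Prod>J\<in>E n. if J = I then plucker (Mflag n as) J else 1)"
    by (rule prod.cong) auto
  also have "\<dots> = plucker (Mflag n as) I" using \<open>I \<in> E n\<close> E_finite by (simp add: prod.delta')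
  finally show "plucker (Mflag n as) I = (\<Prod>J\<in>E n. plucker (Mflag n as) J powi (if J = I then 1 else 0))" by simp
qed

lemma LM_mult: "LM n f \<Longrightarrow> LM n g \<Longrightarrow> LM n (\<lambda>as. f as * g as)"
  unfolding LM_def
proof (elim exE)
  fix e1 e2 assume h1: "\<forall>as\<in>PosS n. f as = (\<Prod>I\<in>E n. plucker (Mflag n as) I powi e1 I)"
    and h2: "\<forall>as\<in>PosS n. g as = (\<Prod>I\<in>E n. plucker (Mflag n as) I powi e2 I)"
  show "\<exists>e. \<forall>as\<in>PosS n. f as * g as = (\<Prod>I\<in>E n. plucker (Mflag n as) I powi e I)"
  proof (intro exI[of _ "\<lambda>I. e1 I + e2 I"] ballI)
    fix as assume as: "as \<in> PosS n"
    have "(\<Prod>I\<in>E n. plucker (Mflag n as) I powi (e1 I + e2 I)) =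
          (\<Prod>I\<in>E n. plucker (Mflag n as) I powi e1 I * plucker (Mflag n as) I powi e2 I)"
      by (rule prod.cong[OF refl], rule power_int_add) (use E_pos[OF as] in force)
    then show "f as * g as = (\<Prod>I\<in>E n. plucker (Mflag n as) I powi (e1 I + e2 I))"
      using h1 h2 as by (simp add: prod.distrib)
  qed
qed

lemma LM_inv: "LM n f \<Longrightarrow> LM n (\<lambda>as. inverse (f as))"
  unfolding LM_def
proof (elim exE)
  fix e1 assume h1: "\<forall>as\<in>PosS n. f as = (\<Prod>I\<in>E n. plucker (Mflag n as) I powi e1 I)"
  show "\<exists>e. \<forall>as\<in>PosS n. inverse (f as) = (\<Prod>I\<in>E n. plucker (Mflag n as) I powi e I)"
  proof (intro exI[of _ "\<lambda>I. - e1 I"] ballI)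
    fix as assume as: "as \<in> PosS n"
    have "(\<Prod>I\<in>E n. plucker (Mflag n as) I powi (- e1 I)) =
          (\<Prod>I\<in>E n. (inverse \<circ> (\<lambda>I. plucker (Mflag n as) I powi e1 I)) I)"
      by (rule prod.cong[OF refl]) (simp add: power_int_minus)
    then show "inverse (f as) = (\<Prod>I\<in>E n. plucker (Mflag n as) I powi (- e1 I))"
      using h1 as prod_inversef[of "\<lambda>I. plucker (Mflag n as) I powi e1 I" "E n"] by (simp add: comp_def)
  qed
qed

lemma LM_div: "LM n f \<Longrightarrow> LM n g \<Longrightarrow> LM n (\<lambda>as. f as / g as)"
  using LM_mult[OF _ LM_inv, of n f g] by (simp add: divide_inverse)

lemma prod_powi: "finite A \<Longrightarrow> (\<Prod>x\<in>A. (f x :: real) powi z) = (\<Prod>x\<in>A. f x) powi z"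
  by (induction A rule: finite_induct) (auto simp: power_int_mult_distrib)

lemma LM_powi: "LM n f \<Longrightarrow> LM n (\<lambda>as. f as powi z)"
  unfolding LM_def
proof (elim exE)
  fix e1 assume h1: "\<forall>as\<in>PosS n. f as = (\<Prod>I\<in>E n. plucker (Mflag n as) I powi e1 I)"
  show "\<exists>e. \<forall>as\<in>PosS n. f as powi z = (\<Prod>I\<in>E n. plucker (Mflag n as) I powi e I)"
  proof (intro exI[of _ "\<lambda>I. e1 I * z"] ballI)
    fix as assume as: "as \<in> PosS n"
    have "(\<Prod>I\<in>E n. plucker (Mflag n as) I powi (e1 I * z)) =
          (\<Prod>I\<in>E n. (plucker (Mflag n as) I powi e1 I) powi z)"
      by (rule prod.cong[OF refl]) (simp add: power_int_mult)
    then show "f as powi z = (\<Prod>I\<in>E n. plucker (Mflag n as) I powi (e1 I * z))"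
      using h1 as by (simp add: prod_powi[OF E_finite])
  qed
qed

lemma LM_prod: "finite S \<Longrightarrow> (\<And>I. I \<in> S \<Longrightarrow> LM n (g I)) \<Longrightarrow> LM n (\<lambda>as. \<Prod>I\<in>S. g I as)"
proof (induction S rule: finite_induct)
  case empty
  then show ?case using LM_one by simp
next
  case (insert x F)
  then show ?case using LM_mult[of n "g x" "\<lambda>as. \<Prod>I\<in>F. g I as"] by simp
qed

lemma LM_Q: "m + p \<le> n \<Longrightarrow> LM n (\<lambda>as. Q n as m p)"
proof (cases "p = 0 \<or> m + p = n")
  case True
  assume "m + p \<le> n"
  then show ?thesis using LM_cong[OF LM_one, of n "\<lambda>as. Q n as m p"] Q_one True by auto
next
  case False
  assume a: "m + p \<le> n"
  then have "1 \<le> m + p \<and> m + p \<le> n - 1" using False by auto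
  then have "T n m p \<in> E n" unfolding E_def by blast
  from LM_P[OF this] show ?thesis
    by (rule LM_cong) (use plucker_Q a in auto)
qed

lemma Pos_len: "as \<in> PosS (Suc n) \<Longrightarrow> n \<le> length as"
  unfolding PosS_def Nn_Suc by auto

lemma Q_first: "as \<in> PosS (Suc n) \<Longrightarrow> m \<le> n \<Longrightarrow> Q (Suc n) as m 1 = (\<Prod>t\<in>{m..<n}. as ! t)"
proof (cases "m = n")
  case True
  assume "m \<le> n"
  then show ?thesis using True Q_one[of 1 m "Suc n"] by simp
next
  case False
  assume as: "as \<in> PosS (Suc n)" and "m \<le> n"
  then have mn: "m + Suc 0 \<le> n" using False by auto
  show ?thesis using Q_rec[OF Pos_len[OF as] mn] Q_one[of 0 m n] mn by simp
qed

lemma LM_first: "t < n \<Longrightarrow> LM (Suc n) (\<lambda>as. as ! t)"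
proof -
  assume t: "t < n"
  have "LM (Suc n) (\<lambda>as. Q (Suc n) as t 1 / Q (Suc n) as (Suc t) 1)"
    by (rule LM_div; rule LM_Q) (use t in auto)
  then show ?thesis
  proof (rule LM_cong)
    fix as assume as: "as \<in> PosS (Suc n)"
    have "Q (Suc n) as t 1 = as ! t * Q (Suc n) as (Suc t) 1"
      using Q_first[OF as] t by (simp add: prod.atLeast_Suc_lessThan)
    moreover have "Q (Suc n) as (Suc t) 1 > 0" using Q_pos[OF as] t by auto
    ultimately show "Q (Suc n) as t 1 / Q (Suc n) as (Suc t) 1 = as ! t" by simp
  qed
qed

lemma LM_inner: "I \<in> E n \<Longrightarrow> LM (Suc n) (\<lambda>as. plucker (Mflag n (drop n as)) I)"
proof -
  assume "I \<in> E n"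
  then obtain m p where I: "I = T n m p" and mp: "1 \<le> m + p" "m + p \<le> n - 1" unfolding E_def by auto
  have mp2: "m + Suc p \<le> n" using mp by auto
  have "LM (Suc n) (\<lambda>as. Q (Suc n) as m (Suc p) / (\<Prod>t\<in>{m+p..<n}. as ! t))"
    by (rule LM_div, rule LM_Q, use mp2 in simp, rule LM_prod, simp, rule LM_first, auto)
  then show ?thesis
  proof (rule LM_cong)
    fix as assume as: "as \<in> PosS (Suc n)"
    have pp: "(\<Prod>t\<in>{m+p..<n}. as ! t) > 0"
      by (rule prod_pos) (use Pos_nth[OF as] in \<open>auto simp: Nn_Suc\<close>)
    show "Q (Suc n) as m (Suc p) / (\<Prod>t\<in>{m+p..<n}. as ! t) = plucker (Mflag n (drop n as)) I"
    proof -
      have "m + p \<le> n" using mp2 by simp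
      then have "plucker (Mflag n (drop n as)) I = Q n (drop n as) m p" unfolding I by (rule plucker_Q)
      moreover have "Q (Suc n) as m (Suc p) = (\<Prod>t\<in>{m+p..<n}. as ! t) * Q n (drop n as) m p"
        by (rule Q_rec[OF Pos_len[OF as] mp2])
      ultimately show ?thesis using pp by (metis less_irrefl nonzero_mult_div_cancel_left)
    qed
  qed
qed

lemma LM_all: "j < Nn n \<Longrightarrow> LM n (\<lambda>as. as ! j)"
proof (induction n arbitrary: j)
  case 0
  then show ?case by (simp add: Nn_def binomial_eq_0)
next
  case (Suc n)
  show ?case
  proof (cases "j < n")
    case True
    then show ?thesis by (rule LM_first)
  next
    case False
    then have j': "j - n < Nn n" using Suc.prems by (simp add: Nn_Suc)
    from Suc.IH[OF j'] obtain e where e: "\<forall>as\<in>PosS n. as ! (j - n) = (\<Prod>I\<in>E n. plucker (Mflag n as) I powi e I)"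
      unfolding LM_def by blast
    have "LM (Suc n) (\<lambda>as. \<Prod>I\<in>E n. plucker (Mflag n (drop n as)) I powi e I)"
      by (rule LM_prod[OF E_finite], rule LM_powi, rule LM_inner)
    then show ?thesis
    proof (rule LM_cong)
      fix as assume as: "as \<in> PosS (Suc n)"
      have "as ! j = drop n as ! (j - n)" using False Pos_len[OF as] by simp
      then show "(\<Prod>I\<in>E n. plucker (Mflag n (drop n as)) I powi e I) = as ! j"
        using e Pos_drop[OF as] by simp
    qed
  qed
qed

lemma sl_ge:
  assumes "finite J" "\<forall>x\<in>J. (1::nat) \<le> x"
  shows "t < card J \<Longrightarrow> Suc t \<le> sorted_list_of_set J ! t"
proof (induction t)
  case 0
  then have "sorted_list_of_set J ! 0 \<in> J"
    using assms set_sorted_list_of_set[OF assms(1)] nth_mem[of 0 "sorted_list_of_set J"] by auto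
  then show ?case using assms by auto
next
  case (Suc t)
  have "sorted_list_of_set J ! t < sorted_list_of_set J ! Suc t"
    using sorted_wrt_nth_less[OF strict_sorted_list_of_set, of t "Suc t" J] Suc.prems by auto
  then show ?case using Suc by auto
qed

lemma Ik_eq:
  assumes as: "as \<in> PosS n" and k: "k \<le> n"
  shows "Ik n (plucker (Mflag n as)) k = {1..k}"
  unfolding Ik_def
proof (rule the_equality)
  let ?P = "plucker (Mflag n as)"
  have Tk: "T n k 0 = {1..k}" unfolding T_def by auto
  have P1: "?P {1..k} = 1" using plucker_Q[of k 0 n as] Q_one[of 0 k n as] k Tk by simp
  have gl: "gale_le {1..k} J" if J: "J \<subseteq> {1..n}" "card J = k" for J
  proof -
    have fJ: "finite J" using J finite_subset by blast
    have "sorted_list_of_set {1..k} = [1..<Suc k]"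
      by (metis atLeastLessThanSuc_atLeastAtMost sorted_list_of_set_range)
    moreover have "\<forall>x\<in>J. (1::nat) \<le> x" using J by auto
    ultimately show ?thesis unfolding gale_le_def using sl_ge[OF fJ] J by (auto simp del: upt_Suc)
  qed
  show "{1..k} \<subseteq> {1..n} \<and> card {1..k} = k \<and> ?P {1..k} \<noteq> 0 \<and>
    (\<forall>J. J \<subseteq> {1..n} \<and> card J = k \<and> ?P J \<noteq> 0 \<longrightarrow> gale_le {1..k} J)"
    using k P1 gl by auto
  fix I assume I: "I \<subseteq> {1..n} \<and> card I = k \<and> ?P I \<noteq> 0 \<and>
    (\<forall>J. J \<subseteq> {1..n} \<and> card J = k \<and> ?P J \<noteq> 0 \<longrightarrow> gale_le I J)"
  then have g: "gale_le I {1..k}" using k P1 by auto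
  have fI: "finite I" using I finite_subset by blast
  have sl: "sorted_list_of_set {1..k} = [1..<Suc k]"
    by (metis atLeastLessThanSuc_atLeastAtMost sorted_list_of_set_range)
  have "sorted_list_of_set I = [1..<Suc k]"
  proof (rule nth_equalityI)
    show "length (sorted_list_of_set I) = length [1..<Suc k]" using I by simp
    fix t assume "t < length (sorted_list_of_set I)"
    then have t: "t < k" using I by simp
    have "sorted_list_of_set I ! t \<le> Suc t" using g t I unfolding gale_le_def sl by (auto simp del: upt_Suc)
    moreover have "\<forall>x\<in>I. (1::nat) \<le> x" using I by auto
    then have "Suc t \<le> sorted_list_of_set I ! t" using sl_ge[OF fI, of t] I t by auto
    ultimately show "sorted_list_of_set I ! t = [1..<Suc k] ! t" using t by (simp del: upt_Suc)
  qed
  then show "I = {1..k}" using set_sorted_list_of_set[OF fI] by (metis atLeastLessThanSuc_atLeastAtMost set_upt)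
qed

lemma PT_pos: "as \<in> PosS n \<Longrightarrow> m + p \<le> n \<Longrightarrow> plucker (Mflag n as) (T n m p) > 0"
  using plucker_Q Q_pos by simp

lemma Xi_step:
  assumes as: "as \<in> PosS n" and m: "1 \<le> m" and mp: "m + p \<le> n - 1"
  shows "Xi n (plucker (Mflag n as)) (T n m p) = T n (m - 1) (Suc p)"
proof -
  let ?P = "plucker (Mflag n as)"
  let ?I = "T n m p"
  define B where "B = {i \<in> ?I. \<exists>j \<in> {1..n} - ?I. i < j \<and> ?P ((?I - {i}) \<union> {j}) \<noteq> 0}"
  define A where "A = {j \<in> {1..n} - ?I. ?P ((?I - {m}) \<union> {j}) \<noteq> 0}"
  have PI: "?P ?I \<noteq> 0" using PT_pos[OF as] mp by (metis le_diff_conv2 less_irrefl not_le order.trans diff_le_self)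
  have key: "(?I - {m}) \<union> {n - p} = T n (m - 1) (Suc p)"
    unfolding T_def using m mp by auto
  have Pkey: "?P ((?I - {m}) \<union> {n - p}) \<noteq> 0"
  proof -
    have "m - 1 + Suc p \<le> n" using m mp by auto
    then show ?thesis unfolding key using PT_pos[OF as, of "m - 1" "Suc p"] by auto
  qed
  have np: "n - p \<in> {1..n} - ?I" "m < n - p" unfolding T_def using m mp by auto
  have mI: "m \<in> ?I" unfolding T_def using m by auto
  have mB: "m \<in> B" unfolding B_def using mI np Pkey by blast
  have Bub: "\<forall>i\<in>B. i \<le> m"
  proof
    fix i assume "i \<in> B"
    then obtain j where "i \<in> ?I" "j \<in> {1..n} - ?I" "i < j" unfolding B_def by blast
    then show "i \<le> m" unfolding T_def by auto
  qed
  have fB: "finite B" unfolding B_def T_def by auto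
  have MB: "Max B = m" by (rule Max_eqI[OF fB]) (use Bub mB in auto)
  have nA: "n - p \<in> A" unfolding A_def using np Pkey by blast
  have Aub: "\<forall>j\<in>A. j \<le> n - p" unfolding A_def T_def by auto
  have fA: "finite A" unfolding A_def by auto
  have MA: "Max A = n - p" by (rule Max_eqI[OF fA]) (use Aub nA in auto)
  have "B \<noteq> {}" using mB by auto
  then show ?thesis unfolding Xi_def Let_def B_def[symmetric]
    using PI MB MA key unfolding A_def by simp
qed

lemma Xi_fix:
  assumes "p \<le> n"
  shows "Xi n P (T n 0 p) = T n 0 p"
proof -
  have "{i \<in> T n 0 p. \<exists>j \<in> {1..n} - T n 0 p. i < j \<and> P ((T n 0 p - {i}) \<union> {j}) \<noteq> 0} = {}"
    unfolding T_def by auto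
  then show ?thesis unfolding Xi_def Let_def by simp
qed

lemma Xi_iter:
  assumes as: "as \<in> PosS n" and k: "k \<le> n - 1"
  shows "(Xi n (plucker (Mflag n as)) ^^ t) (T n k 0) = T n (k - min t k) (min t k)"
proof (induction t)
  case 0
  then show ?case by simp
next
  case (Suc t)
  show ?case
  proof (cases "t < k")
    case True
    have "(Xi n (plucker (Mflag n as)) ^^ Suc t) (T n k 0) = Xi n (plucker (Mflag n as)) (T n (k - t) t)"
      using Suc True by simp
    also have "\<dots> = T n (k - t - 1) (Suc t)" by (rule Xi_step[OF as]) (use True k in auto)
    finally show ?thesis using True by (simp add: min_def)
  next
    case False
    then show ?thesis using Suc Xi_fix[of k n] k by (simp add: min_def)
  qed
qed

lemma extremal_eq:
  assumes as: "as \<in> PosS n"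
  shows "extremal n (plucker (Mflag n as)) = E n"
proof -
  have Ik: "\<And>k. k \<le> n - 1 \<Longrightarrow> Ik n (plucker (Mflag n as)) k = T n k 0"
    using Ik_eq[OF as] unfolding T_def by auto
  show ?thesis
  proof
    show "extremal n (plucker (Mflag n as)) \<subseteq> E n"
    proof
      fix I assume "I \<in> extremal n (plucker (Mflag n as))"
      then obtain t k where I: "I = (Xi n (plucker (Mflag n as)) ^^ t) (Ik n (plucker (Mflag n as)) k)"
        and k: "1 \<le> k" "k \<le> n - 1" unfolding extremal_def by blast
      have "I = T n (k - min t k) (min t k)" using I Ik[OF k(2)] Xi_iter[OF as k(2)] by simp
      moreover have "1 \<le> (k - min t k) + min t k \<and> (k - min t k) + min t k \<le> n - 1" using k by auto
      ultimately show "I \<in> E n" unfolding E_def by blast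
    qed
  next
    show "E n \<subseteq> extremal n (plucker (Mflag n as))"
    proof
      fix I assume "I \<in> E n"
      then obtain m p where I: "I = T n m p" and mp: "1 \<le> m + p" "m + p \<le> n - 1" unfolding E_def by blast
      have "(Xi n (plucker (Mflag n as)) ^^ p) (Ik n (plucker (Mflag n as)) (m + p)) = T n m p"
        using Ik[OF mp(2)] Xi_iter[OF as mp(2), of p] by simp
      then show "I \<in> extremal n (plucker (Mflag n as))" unfolding extremal_def I using mp by blast
    qed
  qed
qed

lemma E_sub: "I \<in> E n \<Longrightarrow> I \<noteq> {} \<and> I \<subset> {1..n}"
proof -
  assume "I \<in> E n"
  then obtain m p where I: "I = T n m p" and mp: "1 \<le> m + p" "m + p \<le> n - 1" unfolding E_def by blast
  have "I \<subseteq> {1..n}" using T_sub[of m p n] mp I by auto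
  moreover have "Suc m \<in> {1..n} - I" unfolding I T_def using mp by auto
  moreover have "I \<noteq> {}"
  proof (cases "m = 0")
    case True
    then have "n \<in> I" unfolding I T_def using mp by auto
    then show ?thesis by auto
  next
    case False
    then have "1 \<in> I" unfolding I T_def by auto
    then show ?thesis by auto
  qed
  ultimately show ?thesis by auto
qed

theorem mainTheorem9:
  fixes n :: nat
  defines "Pos \<equiv> {as :: real list. length as = Nn n \<and> (\<forall>x \<in> set as. x > 0)}"
  shows "inj_on (\<lambda>as. \<lambda>I \<in> {I. I \<noteq> {} \<and> I \<subset> {1..n}}. plucker (Mflag n as) I) Pos
    \<and> (\<forall>j < Nn n. \<exists>e :: nat set \<Rightarrow> int. \<forall>as \<in> Pos.
         as ! j = (\<Prod>I \<in> extremal n (plucker (Mflag n as)).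
                      plucker (Mflag n as) I powi e I))"
proof -
  have PE: "Pos = PosS n" unfolding Pos_def PosS_def by simp
  have main: "\<forall>j < Nn n. \<exists>e :: nat set \<Rightarrow> int. \<forall>as \<in> Pos.
         as ! j = (\<Prod>I \<in> E n. plucker (Mflag n as) I powi e I)"
    using LM_all unfolding LM_def PE by blast
  have part2: "\<forall>j < Nn n. \<exists>e :: nat set \<Rightarrow> int. \<forall>as \<in> Pos.
         as ! j = (\<Prod>I \<in> extremal n (plucker (Mflag n as)). plucker (Mflag n as) I powi e I)"
    using main extremal_eq unfolding PE by simp
  have part1: "inj_on (\<lambda>as. \<lambda>I \<in> {I. I \<noteq> {} \<and> I \<subset> {1..n}}. plucker (Mflag n as) I) Pos"
  proof (rule inj_onI)
    fix x y assume x: "x \<in> Pos" and y: "y \<in> Pos"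
      and eq: "(\<lambda>I \<in> {I. I \<noteq> {} \<and> I \<subset> {1..n}}. plucker (Mflag n x) I) =
               (\<lambda>I \<in> {I. I \<noteq> {} \<and> I \<subset> {1..n}}. plucker (Mflag n y) I)"
    have Peq: "plucker (Mflag n x) I = plucker (Mflag n y) I" if I: "I \<in> E n" for I
      using fun_cong[OF eq, of I] E_sub[OF I] by simp
    show "x = y"
    proof (rule nth_equalityI)
      show "length x = length y" using x y unfolding Pos_def by simp
      fix j assume "j < length x"
      then have j: "j < Nn n" using x unfolding Pos_def by simp
      from main j obtain e where e: "\<forall>as \<in> Pos. as ! j = (\<Prod>I \<in> E n. plucker (Mflag n as) I powi e I)"
        by blast
      have "x ! j = (\<Prod>I \<in> E n. plucker (Mflag n x) I powi e I)" using e x by blast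
      also have "\<dots> = (\<Prod>I \<in> E n. plucker (Mflag n y) I powi e I)"
        by (rule prod.cong) (auto simp: Peq)
      also have "\<dots> = y ! j" using e y by simp
      finally show "x ! j = y ! j" .
    qed
  qed
  show ?thesis using part1 part2 by blast
qed

end
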